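(* Let $(W_t)_{t\ge 0}$ be a standard one-dimensional Brownian motion with $W_0=0$ on a complete probability space $(\Omega,\mathscr{F},P)$ with a right-continuous filtration $(\mathscr{F}_t)_{t\ge0}$. For $x\in[0,1]$ define the stopping time $$\sigma(x):=\inf\Big\{t>0 \,\Big|\, \tfrac{x+t+W_t}{1+2t+2W_t}\notin[0,1]\Big\}\wedge\inf\{t>0\,|\,1+2t+2W_t=0\},$$ and for $t<\sigma(x)$ define $$u(x,t):=\frac{1-x+t+W_t}{1+2t+2W_t}.$$ Then, for almost all $\omega$ and all $(x,t)$ with $x\in[0,1]$ and $t<\sigma(x)$, $u$ solves the stochastic partial differential equation $$\mathrm{d} u=-(1-2u)\,u_x\,\mathrm{d} t-(1-2u)\,u_x\circ\mathrm{d} W_t,\qquad u(x,0)=1-x,$$ i.e. $u(x,t)=1-x-\int_0^t(1-2u(x,s))\,u_x(x,s)\,\mathrm{d}s-\int_0^t(1-2u(x,s))\,u_x(x,s)\circ\mathrm{d}W_s$, where $\circ\,\mathrm{d}W$ denotes the Stratonovich integral.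
   Context: This is a stochastically perturbed Lighthill–Whitham–Richards traffic model $u_t+(1-2u)u_x+(1-2u)u_x\circ \dot W_t=0$ with initial density $g(x)=1-x$ on $[0,1]$. Here $u_x$ denotes the partial derivative of $u$ with respect to the space variable $x$ (for fixed $t$ and $\omega$). *)

theory Defs
  imports "HOL-Probability.Probability"
begin

definition brownian_motion :: "'a measure \<Rightarrow> (real \<Rightarrow> 'a \<Rightarrow> real) \<Rightarrow> bool" where
  "brownian_motion M W \<longleftrightarrow>
     prob_space M \<and>
     (\<forall>t. W t \<in> borel_measurable M) \<and>
     (\<forall>\<omega>\<in>space M. W 0 \<omega> = 0) \<and>
     (\<forall>\<omega>\<in>space M. continuous_on {0..} (\<lambda>t. W t \<omega>)) \<and>
     (\<forall>s t. 0 \<le> s \<and> s < t \<longrightarrow>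
        distributed M lborel (\<lambda>\<omega>. W t \<omega> - W s \<omega>) (normal_density 0 (sqrt (t - s)))) \<and>
     (\<forall>ts :: real list. sorted ts \<and> (\<forall>r\<in>set ts. 0 \<le> r) \<longrightarrow>
        prob_space.indep_vars M (\<lambda>_. borel)
          (\<lambda>i \<omega>. W (ts ! Suc i) \<omega> - W (ts ! i) \<omega>) {..<length ts - 1})"

text \<open>The stopping time sigma(x); Inf of the empty set of ereals is infinity.\<close>
definition lwr_sigma :: "(real \<Rightarrow> 'a \<Rightarrow> real) \<Rightarrow> real \<Rightarrow> 'a \<Rightarrow> ereal" where
  "lwr_sigma W x \<omega> =
     min (Inf {ereal t | t. 0 < t \<and> (x + t + W t \<omega>) / (1 + 2 * t + 2 * W t \<omega>) \<notin> {0..1}})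
         (Inf {ereal t | t. 0 < t \<and> 1 + 2 * t + 2 * W t \<omega> = 0})"

definition lwr_u :: "(real \<Rightarrow> 'a \<Rightarrow> real) \<Rightarrow> real \<Rightarrow> real \<Rightarrow> 'a \<Rightarrow> real" where
  "lwr_u W x t \<omega> = (1 - x + t + W t \<omega>) / (1 + 2 * t + 2 * W t \<omega>)"

definition strat_sum :: "(real \<Rightarrow> 'a \<Rightarrow> real) \<Rightarrow> (real \<Rightarrow> 'a \<Rightarrow> real) \<Rightarrow> real \<Rightarrow> nat \<Rightarrow> 'a \<Rightarrow> real" where
  "strat_sum W H t n \<omega> =
     (\<Sum>k<n. (H (real k * t / real n) \<omega> + H (real (Suc k) * t / real n) \<omega>) / 2
             * (W (real (Suc k) * t / real n) \<omega> - W (real k * t / real n) \<omega>))"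

text \<open>I is the Stratonovich integral of H dW over [0,t] on the event A: the Stratonovich
  sums converge in probability to I on A (localised definition, as H need only be
  defined before a stopping time).\<close>
definition stratonovich_on ::
  "'a measure \<Rightarrow> (real \<Rightarrow> 'a \<Rightarrow> real) \<Rightarrow> (real \<Rightarrow> 'a \<Rightarrow> real) \<Rightarrow> real \<Rightarrow> 'a set \<Rightarrow> ('a \<Rightarrow> real) \<Rightarrow> bool" where
  "stratonovich_on M W H t A I \<longleftrightarrow>
     (\<forall>\<epsilon>>0.
        (\<forall>n. {\<omega> \<in> space M. \<omega> \<in> A \<and> \<epsilon> < \<bar>strat_sum W H t n \<omega> - I \<omega>\<bar>} \<in> sets M) \<and>
        ((\<lambda>n. measure M {\<omega> \<in> space M. \<omega> \<in> A \<and> \<epsilon> < \<bar>strat_sum W H t n \<omega> - I \<omega>\<bar>})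
           \<longlonglongrightarrow> 0))"

end

theory Submission
  imports Defs
begin



definition Dp :: "(real \<Rightarrow> 'a \<Rightarrow> real) \<Rightarrow> real \<Rightarrow> 'a \<Rightarrow> real" where
  "Dp W s \<omega> = 1 + 2 * s + 2 * W s \<omega>"

lemma deriv_u: "deriv (\<lambda>y. lwr_u W y s \<omega>) x = - 1 / Dp W s \<omega>"
proof -
  have "((\<lambda>y. (1 - y + s + W s \<omega>) / Dp W s \<omega>) has_real_derivative (-1 / Dp W s \<omega>)) (at x)"
    by (rule DERIV_cdivide) (auto intro!: derivative_eq_intros)
  then show ?thesis unfolding lwr_u_def Dp_def by (rule DERIV_imp_deriv)
qed

lemma u_eq: "Dp W s \<omega> \<noteq> 0 \<Longrightarrow> lwr_u W x s \<omega> = 1/2 + (1/2 - x) / Dp W s \<omega>"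
  unfolding lwr_u_def Dp_def by (simp add: field_simps)

lemma H_eq: "(1 - 2 * lwr_u W x s \<omega>) * deriv (\<lambda>y. lwr_u W y s \<omega>) x = (1 - 2*x) / (Dp W s \<omega>)^2"
proof (cases "Dp W s \<omega> = 0")
  case True
  then show ?thesis by (simp add: deriv_u)
next
  case False
  have "1 - 2 * lwr_u W x s \<omega> = (2*x - 1) / Dp W s \<omega>"
    using False by (simp add: u_eq field_simps)
  then show ?thesis using False by (simp only: deriv_u) (simp add: field_simps power2_eq_square)
qed

lemma cube_le0: fixes p q :: real assumes "0 \<le> p" "0 \<le> q" shows "(p + q)^3 \<le> 4 * (p^3 + q^3)"
proof -
  have "0 \<le> 3 * (p + q) * (p - q)^2" using assms by simp
  then show ?thesis by (simp add: power2_eq_square power3_eq_cube algebra_simps)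
qed

lemma cube_le: fixes a b :: real shows "\<bar>a + b\<bar>^3 \<le> 4 * (\<bar>a\<bar>^3 + \<bar>b\<bar>^3)"
proof -
  have "\<bar>a + b\<bar>^3 \<le> (\<bar>a\<bar> + \<bar>b\<bar>)^3" by (rule power_mono) auto
  also have "\<dots> \<le> 4 * (\<bar>a\<bar>^3 + \<bar>b\<bar>^3)" by (rule cube_le0) auto
  finally show ?thesis .
qed



lemma trap:
  fixes g :: "real \<Rightarrow> real" and t :: real
  assumes t0: "0 \<le> t" and gc: "continuous_on {0..t} g"
  shows "(\<lambda>n. \<Sum>k<n. (g (real k * t / real n) + g (real (Suc k) * t / real n)) / 2 * (t / real n))
           \<longlonglongrightarrow> integral {0..t} g"
proof (cases "t = 0")
  case True
  then show ?thesis by simp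
next
  case False
  then have tp: "0 < t" using t0 by simp
  define F where "F s = integral {0..s} g" for s
  have Fd: "\<And>s. s \<in> {0..t} \<Longrightarrow> (F has_real_derivative g s) (at s within {0..t})"
    unfolding F_def by (rule integral_has_real_derivative[OF gc])
  have Fc: "continuous_on {0..t} F"
    by (rule DERIV_continuous_on) (use Fd in blast)
  have uc: "uniformly_continuous_on {0..t} g"
    by (rule compact_uniformly_continuous[OF gc]) auto
  show ?thesis
  proof (rule LIMSEQ_I)
    fix r :: real assume rp: "0 < r"
    define e where "e = r / (2 * t)"
    have ep: "0 < e" using rp tp by (simp add: e_def)
    obtain d where dp: "0 < d" and dd: "\<And>a b. a \<in> {0..t} \<Longrightarrow> b \<in> {0..t} \<Longrightarrow> dist b a < d \<Longrightarrow> dist (g b) (g a) < e"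
      using uc ep unfolding uniformly_continuous_on_def by metis
    obtain N :: nat where N: "t / d < real N" using reals_Archimedean2 by blast
    have Npos: "0 < N" using N tp dp
      by (metis divide_pos_pos gr0I less_le_not_le of_nat_0)
    show "\<exists>N. \<forall>n\<ge>N. norm ((\<Sum>k<n. (g (real k * t / real n) + g (real (Suc k) * t / real n)) / 2 * (t / real n)) - integral {0..t} g) < r"
    proof (intro exI allI impI)
      fix n assume nN: "N \<le> n"
      then have np: "0 < n" using Npos by simp
      define h where "h = t / real n"
      have hp: "0 < h" using np tp by (simp add: h_def)
      have hd: "h < d"
      proof -
        have "t / d < real n" using N nN by linarith
        then have "t < real n * d" using dp by (simp add: field_simps)
        then show ?thesis using np by (simp add: h_def field_simps)
      qed
      define s where "s k = real k * t / real n" for k :: nat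
      have sS: "s (Suc k) = s k + h" for k using np by (simp add: s_def h_def field_simps)
      have s0: "s 0 = 0" by (simp add: s_def)
      have sn: "s n = t" using np by (simp add: s_def)
      have srange: "k \<le> n \<Longrightarrow> s k \<in> {0..t}" for k
        using np tp by (auto simp: s_def field_simps)
      have int_eq: "integral {0..t} g = (\<Sum>k<n. F (s (Suc k)) - F (s k))"
        using sum_lessThan_telescope[of "\<lambda>k. F (s k)" n] by (simp add: sn s0 F_def)
      have step: "\<bar>(g (s k) + g (s (Suc k))) / 2 * h - (F (s (Suc k)) - F (s k))\<bar> \<le> h * e"
        if kn: "k < n" for k
      proof -
        have lt: "s k < s (Suc k)" using sS hp by simp
        have sub: "{s k..s (Suc k)} \<subseteq> {0..t}" using srange[of k] srange[of "Suc k"] kn by auto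
        have "continuous_on {s k..s (Suc k)} F" using Fc sub continuous_on_subset by blast
        moreover have "F differentiable (at z)" if "s k < z" "z < s (Suc k)" for z
        proof -
          have z: "0 < z" "z < t" using that srange[of k] srange[of "Suc k"] kn by auto
          have "(F has_real_derivative g z) (at z)"
            using Fd[of z] z at_within_Icc_at[of 0 z t] by auto
          then show ?thesis using real_differentiable_def by blast
        qed
        ultimately obtain l z where z: "s k < z" "z < s (Suc k)" and dz: "DERIV F z :> l"
          and mv: "F (s (Suc k)) - F (s k) = (s (Suc k) - s k) * l"
          using MVT[OF lt] by blast
        have z': "0 < z" "z < t" using z srange[of k] srange[of "Suc k"] kn by auto
        have "(F has_real_derivative g z) (at z)"
          using Fd[of z] z' at_within_Icc_at[of 0 z t] by auto
        then have l: "l = g z" using dz DERIV_unique by blast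
        have zr: "z \<in> {0..t}" using z' by auto
        have e1: "\<bar>g (s k) - g z\<bar> < e"
          using dd[OF zr srange[of k]] z sS hd kn by (auto simp: dist_real_def)
        have e2: "\<bar>g (s (Suc k)) - g z\<bar> < e"
          using dd[OF zr srange[of "Suc k"]] z sS hd kn by (auto simp: dist_real_def)
        have "(g (s k) + g (s (Suc k))) / 2 * h - (F (s (Suc k)) - F (s k))
             = h * (((g (s k) - g z) + (g (s (Suc k)) - g z)) / 2)"
          using mv l sS by (simp add: algebra_simps)
        also have "\<bar>\<dots>\<bar> \<le> h * e"
        proof -
          have "\<bar>((g (s k) - g z) + (g (s (Suc k)) - g z)) / 2\<bar> \<le> e"
            using e1 e2 abs_triangle_ineq[of "g (s k) - g z" "g (s (Suc k)) - g z"] by simp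
          then show ?thesis using hp by (simp add: abs_mult)
        qed
        finally show ?thesis .
      qed
      have "(\<Sum>k<n. (g (real k * t / real n) + g (real (Suc k) * t / real n)) / 2 * (t / real n)) - integral {0..t} g
          = (\<Sum>k<n. (g (s k) + g (s (Suc k))) / 2 * h - (F (s (Suc k)) - F (s k)))"
        by (simp add: int_eq sum_subtractf s_def h_def)
      also have "\<bar>\<dots>\<bar> \<le> (\<Sum>k<n. \<bar>(g (s k) + g (s (Suc k))) / 2 * h - (F (s (Suc k)) - F (s k))\<bar>)"
        by (rule sum_abs)
      also have "\<dots> \<le> (\<Sum>k<n. h * e)" by (rule sum_mono) (use step in auto)
      also have "\<dots> = t * e" using np by (simp add: h_def)
      also have "\<dots> < r" using rp tp by (simp add: e_def)
      finally show "norm ((\<Sum>k<n. (g (real k * t / real n) + g (real (Suc k) * t / real n)) / 2 * (t / real n)) - integral {0..t} g) < r"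
        by simp
    qed
  qed
qed



lemma meas_tendsto0:
  assumes M: "prob_space M" and F: "\<And>n. F n \<in> sets M"
    and ev: "\<And>\<omega>. \<omega> \<in> space M \<Longrightarrow> \<exists>N. \<forall>n\<ge>N. \<omega> \<notin> F n"
  shows "(\<lambda>n. measure M (F n)) \<longlonglongrightarrow> 0"
proof -
  interpret prob_space M by (rule M)
  define B where "B n = (\<Union>m\<in>{n..}. F m)" for n
  have Bs: "B n \<in> sets M" for n unfolding B_def using F by auto
  have dec: "decseq B" unfolding B_def decseq_def by (auto intro: order_trans)
  have empty: "(\<Inter>n. B n) = {}"
  proof (rule ccontr)
    assume "(\<Inter>n. B n) \<noteq> {}"
    then obtain \<omega> where w: "\<And>n. \<omega> \<in> B n" by blast
    then obtain m where "\<omega> \<in> F m" unfolding B_def by blast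
    then have "\<omega> \<in> space M" using F sets.sets_into_space by blast
    then obtain N where N: "\<forall>n\<ge>N. \<omega> \<notin> F n" using ev by blast
    from w[of N] obtain m where "m \<ge> N" "\<omega> \<in> F m" unfolding B_def by auto
    then show False using N by blast
  qed
  have lim: "(\<lambda>n. measure M (B n)) \<longlonglongrightarrow> 0"
    using finite_Lim_measure_decseq[of B] Bs dec empty by auto
  show ?thesis
  proof (rule tendsto_sandwich[OF _ _ tendsto_const lim])
    show "\<forall>\<^sub>F n in sequentially. 0 \<le> measure M (F n)" by simp
    show "\<forall>\<^sub>F n in sequentially. measure M (F n) \<le> measure M (B n)"
      using finite_measure_mono[of "F _" "B _"] Bs unfolding B_def by (auto intro!: always_eventually)
  qed
qed

lemma all_grid:
  fixes f :: "real \<Rightarrow> real"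
  assumes T0: "0 \<le> T" and fc: "continuous_on {0..T} f"
  shows "(\<forall>s\<in>{0..T}. b \<le> f s) \<longleftrightarrow> (\<forall>m i. i \<le> Suc m \<longrightarrow> b \<le> f (T * real i / real (Suc m)))"
proof
  assume H: "\<forall>s\<in>{0..T}. b \<le> f s"
  show "\<forall>m i. i \<le> Suc m \<longrightarrow> b \<le> f (T * real i / real (Suc m))"
  proof (intro allI impI)
    fix m i :: nat assume "i \<le> Suc m"
    then have "T * real i \<le> T * real (Suc m)" using T0 by (intro mult_left_mono) auto
    then have "T * real i / real (Suc m) \<in> {0..T}" using T0
      by (auto simp: field_simps)
    then show "b \<le> f (T * real i / real (Suc m))" using H by blast
  qed
next
  assume H: "\<forall>m i. i \<le> Suc m \<longrightarrow> b \<le> f (T * real i / real (Suc m))"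
  show "\<forall>s\<in>{0..T}. b \<le> f s"
  proof
    fix s assume s: "s \<in> {0..T}"
    show "b \<le> f s"
    proof (cases "T = 0")
      case True
      then have "s = 0" using s by auto
      then show ?thesis using H[rule_format, of 0 0] True by simp
    next
      case False
      then have Tp: "0 < T" using T0 by simp
      define q where "q m = s * real (Suc m) / T" for m
      define r where "r m = T * real (nat \<lfloor>q m\<rfloor>) / real (Suc m)" for m
      have q0: "0 \<le> q m" for m using s Tp by (simp add: q_def)
      have fl: "real (nat \<lfloor>q m\<rfloor>) = of_int \<lfloor>q m\<rfloor>" for m using q0[of m] by simp
      have flb: "q m - 1 < real (nat \<lfloor>q m\<rfloor>)" "real (nat \<lfloor>q m\<rfloor>) \<le> q m" for m
        unfolding fl by linarith+
      have rle: "r m \<le> s" for m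
      proof -
        have "r m \<le> T * q m / real (Suc m)" unfolding r_def using flb(2)[of m] Tp
          by (intro divide_right_mono mult_left_mono) auto
        also have "\<dots> = s" using Tp by (simp add: q_def)
        finally show ?thesis .
      qed
      have rge: "s - T * inverse (real (Suc m)) \<le> r m" for m
      proof -
        have "T * (q m - 1) / real (Suc m) \<le> r m" unfolding r_def using flb(1)[of m] Tp
          by (intro divide_right_mono mult_left_mono) auto
        moreover have "T * (q m - 1) / real (Suc m) = s - T * inverse (real (Suc m))"
        proof -
          have "T * q m / real (Suc m) = s" using Tp by (simp add: q_def)
          then show ?thesis by (simp add: right_diff_distrib diff_divide_distrib divide_inverse left_diff_distrib)
        qed
        ultimately show ?thesis by simp
      qed
      have r0: "0 \<le> r m" for m unfolding r_def using Tp by simp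
      have iq: "nat \<lfloor>q m\<rfloor> \<le> Suc m" for m
      proof -
        have "s * real (Suc m) \<le> T * real (Suc m)" using s by (intro mult_right_mono) auto
        then have "q m \<le> real (Suc m)" using Tp by (simp add: q_def field_simps)
        then have "real (nat \<lfloor>q m\<rfloor>) \<le> real (Suc m)" using flb(2)[of m] by linarith
        then show ?thesis by linarith
      qed
      have lim1: "(\<lambda>m. s - T * inverse (real (Suc m))) \<longlonglongrightarrow> s"
        using tendsto_diff[OF tendsto_const tendsto_mult_right_zero[OF LIMSEQ_inverse_real_of_nat, of T]]
        by simp
      have rlim: "r \<longlonglongrightarrow> s"
        by (rule tendsto_sandwich[OF _ _ lim1 tendsto_const]) (use rle rge in auto)
      have flim: "(\<lambda>m. f (r m)) \<longlonglongrightarrow> f s"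
        by (rule continuous_on_tendsto_compose[OF fc rlim s]) (use r0 rle s in \<open>auto intro!: always_eventually order_trans[OF rle]\<close>)
      show ?thesis
      proof (rule LIMSEQ_le_const[OF flim], intro exI allI impI)
        fix m show "b \<le> f (r m)" using H iq unfolding r_def by blast
      qed
    qed
  qed
qed



lemma sig_char:
  assumes W0: "W 0 \<omega> = 0" and Wc: "continuous_on {0..} (\<lambda>s. W s \<omega>)" and x: "x \<in> {0..1}" and t0: "0 \<le> t"
  shows "ereal t < lwr_sigma W x \<omega> \<longleftrightarrow>
    (\<exists>j k::nat. \<forall>s\<in>{0..t + 1/(real j+1)}. max (max (-x) (x-1)) (-1/2 + 1/(real k+1)) \<le> s + W s \<omega>)"
  (is "_ \<longleftrightarrow> ?R")
proof -
  define S1 where "S1 = {ereal s | s. 0 < s \<and> (x + s + W s \<omega>) / (1 + 2 * s + 2 * W s \<omega>) \<notin> {0..1}}"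
  define S2 where "S2 = {ereal s | s. 0 < s \<and> 1 + 2 * s + 2 * W s \<omega> = 0}"
  have sig: "lwr_sigma W x \<omega> = min (Inf S1) (Inf S2)" unfolding lwr_sigma_def S1_def S2_def by simp
  have Yc: "continuous_on {0..} (\<lambda>s. s + W s \<omega>)" using Wc by (intro continuous_intros)
  have Dc: "continuous_on {0..} (\<lambda>s. 1 + 2 * s + 2 * W s \<omega>)" using Wc by (intro continuous_intros)
  show ?thesis
  proof
    assume "ereal t < lwr_sigma W x \<omega>"
    then have "ereal t < min (Inf S1) (Inf S2)" using sig by simp
    then obtain T where tT: "ereal t < ereal T" and Tm: "ereal T < min (Inf S1) (Inf S2)"
      using ereal_dense2 by blast
    have tT': "t < T" using tT by simp
    have nS1: "\<And>s. 0 < s \<Longrightarrow> s \<le> T \<Longrightarrow> (x + s + W s \<omega>) / (1 + 2 * s + 2 * W s \<omega>) \<in> {0..1}"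
    proof (rule ccontr)
      fix s assume "0 < s" "s \<le> T" "(x + s + W s \<omega>) / (1 + 2 * s + 2 * W s \<omega>) \<notin> {0..1}"
      then have "ereal s \<in> S1" unfolding S1_def by blast
      then have "Inf S1 \<le> ereal s" by (rule Inf_lower)
      then show False using Tm \<open>s \<le> T\<close> by (simp add: min_less_iff_conj) (meson ereal_less_eq(3) not_le order_trans)
    qed
    have nS2: "\<And>s. 0 < s \<Longrightarrow> s \<le> T \<Longrightarrow> 1 + 2 * s + 2 * W s \<omega> \<noteq> 0"
    proof
      fix s assume "0 < s" "s \<le> T" "1 + 2 * s + 2 * W s \<omega> = 0"
      then have "ereal s \<in> S2" unfolding S2_def by blast
      then have "Inf S2 \<le> ereal s" by (rule Inf_lower)
      then show False using Tm \<open>s \<le> T\<close> by (simp add: min_less_iff_conj) (meson ereal_less_eq(3) not_le order_trans)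
    qed
    have Dpos: "0 < 1 + 2 * s + 2 * W s \<omega>" if s: "s \<in> {0..T}" for s
    proof (rule ccontr)
      assume neg: "\<not> 0 < 1 + 2 * s + 2 * W s \<omega>"
      have "continuous_on {0..s} (\<lambda>s. 1 + 2 * s + 2 * W s \<omega>)"
        using Dc by (rule continuous_on_subset) auto
      then obtain r where r: "0 \<le> r" "r \<le> s" "1 + 2 * r + 2 * W r \<omega> = 0"
        using IVT2'[of "\<lambda>s. 1 + 2 * s + 2 * W s \<omega>" s 0 0] neg s W0 by force
      have "r \<noteq> 0" using r W0 by auto
      then show False using nS2[of r] r s by auto
    qed
    have Ylow: "max (-x) (x-1) \<le> s + W s \<omega>" if s: "s \<in> {0..T}" for s
    proof (cases "s = 0")
      case True then show ?thesis using W0 x by auto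
    next
      case False
      then have "0 < s" using s by auto
      then have q: "(x + s + W s \<omega>) / (1 + 2 * s + 2 * W s \<omega>) \<in> {0..1}" using nS1 s by auto
      have D: "0 < 1 + 2 * s + 2 * W s \<omega>" using Dpos s by blast
      from q D have "0 \<le> x + s + W s \<omega>" "x + s + W s \<omega> \<le> 1 + 2 * s + 2 * W s \<omega>"
        by (auto simp: divide_le_eq_1 zero_le_divide_iff)
      then show ?thesis by simp
    qed
    obtain z where z: "z \<in> {0..T}" and zmin: "\<And>y. y \<in> {0..T} \<Longrightarrow> z + W z \<omega> \<le> y + W y \<omega>"
      using continuous_attains_inf[of "{0..T}" "\<lambda>s. s + W s \<omega>"] continuous_on_subset[OF Yc, of "{0..T}"] tT' t0
      by fastforce
    have "0 < (z + W z \<omega>) + 1/2" using Dpos[OF z] by simp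
    then obtain k0 :: nat where k0: "0 < k0" "inverse (real k0) < (z + W z \<omega>) + 1/2"
      using ex_inverse_of_nat_less by blast
    have "0 < T - t" using tT' by simp
    then obtain j0 :: nat where j0: "0 < j0" "inverse (real j0) < T - t"
      using ex_inverse_of_nat_less by blast
    show ?R
    proof (intro exI ballI)
      fix s assume s: "s \<in> {0..t + 1 / (real (j0 - 1) + 1)}"
      have e1: "real (j0 - 1) + 1 = real j0" using j0 by simp
      have e2: "real (k0 - 1) + 1 = real k0" using k0 by simp
      have sT: "s \<in> {0..T}" using s j0 by (auto simp: e1 inverse_eq_divide)
      show "max (max (-x) (x-1)) (-1/2 + 1/(real (k0 - 1)+1)) \<le> s + W s \<omega>"
        using Ylow[OF sT] zmin[OF sT] k0 by (auto simp: e2 inverse_eq_divide)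
    qed
  next
    assume ?R
    then obtain j k :: nat where H: "\<And>s. s \<in> {0..t + 1/(real j+1)} \<Longrightarrow>
        max (max (-x) (x-1)) (-1/2 + 1/(real k+1)) \<le> s + W s \<omega>" by blast
    define T where "T = t + 1/(real j+1)"
    have tT: "t < T" unfolding T_def by simp
    have good: "0 < 1 + 2 * s + 2 * W s \<omega> \<and> (x + s + W s \<omega>) / (1 + 2 * s + 2 * W s \<omega>) \<in> {0..1}"
      if "0 < s" "s \<le> T" for s
    proof -
      have h: "max (max (-x) (x-1)) (-1/2 + 1/(real k+1)) \<le> s + W s \<omega>" using H that T_def by auto
      have "0 < 1/(real k+1)" by simp
      then have D: "0 < 1 + 2 * s + 2 * W s \<omega>" using h by linarith
      have "0 \<le> x + s + W s \<omega>" "x + s + W s \<omega> \<le> 1 + 2 * s + 2 * W s \<omega>" using h by auto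
      then show ?thesis using D by (auto simp: divide_le_eq_1 zero_le_divide_iff)
    qed
    have i1: "ereal T \<le> Inf S1"
    proof (rule Inf_greatest)
      fix e assume "e \<in> S1"
      then obtain s where "e = ereal s" "0 < s" "(x + s + W s \<omega>) / (1 + 2 * s + 2 * W s \<omega>) \<notin> {0..1}"
        unfolding S1_def by blast
      then show "ereal T \<le> e" using good[of s] by force
    qed
    have i2: "ereal T \<le> Inf S2"
    proof (rule Inf_greatest)
      fix e assume "e \<in> S2"
      then obtain s where "e = ereal s" "0 < s" "1 + 2 * s + 2 * W s \<omega> = 0"
        unfolding S2_def by blast
      then show "ereal T \<le> e" using good[of s] by force
    qed
    have tT2: "ereal t < ereal T" using tT by simp
    have "ereal t < Inf S1" using tT2 i1 by (rule less_le_trans)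
    moreover have "ereal t < Inf S2" using tT2 i2 by (rule less_le_trans)
    ultimately show "ereal t < lwr_sigma W x \<omega>" unfolding sig by simp
  qed
qed






definition gp :: "real \<Rightarrow> nat \<Rightarrow> nat \<Rightarrow> real" where
  "gp t n k = real k * t / real n"

definition Tn :: "(real \<Rightarrow> 'a \<Rightarrow> real) \<Rightarrow> real \<Rightarrow> real \<Rightarrow> nat \<Rightarrow> 'a \<Rightarrow> real" where
  "Tn W x t n \<omega> = (\<Sum>k<n. ((1 - 2*x) / (Dp W (gp t n k) \<omega>)^2 + (1 - 2*x) / (Dp W (gp t n (Suc k)) \<omega>)^2) / 2 * (t / real n))"

definition Gl :: "(real \<Rightarrow> 'a \<Rightarrow> real) \<Rightarrow> real \<Rightarrow> real \<Rightarrow> 'a \<Rightarrow> real" where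
  "Gl W x t \<omega> = lim (\<lambda>n. Tn W x t n \<omega>)"

definition Iw :: "(real \<Rightarrow> 'a \<Rightarrow> real) \<Rightarrow> real \<Rightarrow> real \<Rightarrow> 'a \<Rightarrow> real" where
  "Iw W x t \<omega> = 1 - x - Gl W x t \<omega> - lwr_u W x t \<omega>"

definition Vn :: "(real \<Rightarrow> 'a \<Rightarrow> real) \<Rightarrow> real \<Rightarrow> nat \<Rightarrow> 'a \<Rightarrow> real" where
  "Vn W t n \<omega> = (\<Sum>k<n. \<bar>W (gp t n (Suc k)) \<omega> - W (gp t n k) \<omega>\<bar>^3)"

definition Cub :: "(real \<Rightarrow> 'a \<Rightarrow> real) \<Rightarrow> real \<Rightarrow> real \<Rightarrow> nat \<Rightarrow> 'a \<Rightarrow> real" where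
  "Cub W x t n \<omega> = (1 - 2*x) * (\<Sum>k<n. 2 * ((Dp W (gp t n (Suc k)) \<omega> - Dp W (gp t n k) \<omega>) / 2)^3
      / ((Dp W (gp t n k) \<omega>)^2 * (Dp W (gp t n (Suc k)) \<omega>)^2))"

lemma key_alg:
  fixes a b y c x :: real
  assumes a: "a \<noteq> 0" and b: "b \<noteq> 0" and y: "y = (b - a) / 2" and c: "c = 1 - 2*x"
  shows "(c / a^2 + c / b^2) / 2 * y = - ((1/2 - x) / b - (1/2 - x) / a) + c * (2 * y^3 / (a^2 * b^2))"
  using a b unfolding y c by (simp add: field_simps power2_eq_square power3_eq_cube)

lemma path_ident:
  assumes W0: "W 0 \<omega> = 0" and n: "0 < n" and Dnz: "\<And>k. k \<le> n \<Longrightarrow> Dp W (gp t n k) \<omega> \<noteq> 0"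
  shows "strat_sum W (\<lambda>s \<omega>. (1 - 2*x) / (Dp W s \<omega>)^2) t n \<omega> - Iw W x t \<omega>
       = (Gl W x t \<omega> - Tn W x t n \<omega>) + Cub W x t n \<omega>"
proof -
  define D where "D k = Dp W (gp t n k) \<omega>" for k
  define u where "u k = lwr_u W x (gp t n k) \<omega>" for k
  have uD: "k \<le> n \<Longrightarrow> u k = 1/2 + (1/2 - x) / D k" for k
    unfolding u_def D_def by (rule u_eq) (rule Dnz)
  have gS: "gp t n (Suc k) - gp t n k = t / real n" for k
    unfolding gp_def using n by (simp add: field_simps)
  have step: "((1 - 2*x) / (D k)^2 + (1 - 2*x) / (D (Suc k))^2) / 2 * (W (gp t n (Suc k)) \<omega> - W (gp t n k) \<omega>)
      = - (u (Suc k) - u k) - ((1 - 2*x) / (D k)^2 + (1 - 2*x) / (D (Suc k))^2) / 2 * (t / real n)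
        + (1 - 2*x) * (2 * ((D (Suc k) - D k) / 2)^3 / ((D k)^2 * (D (Suc k))^2))"
    if k: "k < n" for k
  proof -
    have yk: "(D (Suc k) - D k) / 2 = (W (gp t n (Suc k)) \<omega> - W (gp t n k) \<omega>) + t / real n"
    proof -
      have "D (Suc k) - D k = 2 * (gp t n (Suc k) - gp t n k) + 2 * (W (gp t n (Suc k)) \<omega> - W (gp t n k) \<omega>)"
        unfolding D_def Dp_def by (simp add: algebra_simps)
      then show ?thesis unfolding gS by simp
    qed
    have "((1 - 2*x) / (D k)^2 + (1 - 2*x) / (D (Suc k))^2) / 2 * ((D (Suc k) - D k) / 2)
       = - ((1/2 - x) / D (Suc k) - (1/2 - x) / D k) + (1 - 2*x) * (2 * ((D (Suc k) - D k) / 2)^3 / ((D k)^2 * (D (Suc k))^2))"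
      by (rule key_alg) (use Dnz k in \<open>auto simp: D_def\<close>)
    moreover have "u (Suc k) - u k = (1/2 - x) / D (Suc k) - (1/2 - x) / D k"
      using uD[of k] uD[of "Suc k"] k by simp
    ultimately have e: "((1 - 2*x) / (D k)^2 + (1 - 2*x) / (D (Suc k))^2) / 2 * ((W (gp t n (Suc k)) \<omega> - W (gp t n k) \<omega>) + t / real n)
       = - (u (Suc k) - u k) + (1 - 2*x) * (2 * ((D (Suc k) - D k) / 2)^3 / ((D k)^2 * (D (Suc k))^2))"
      unfolding yk by simp
    show ?thesis using e unfolding distrib_left by linarith
  qed
  have "strat_sum W (\<lambda>s \<omega>. (1 - 2*x) / (Dp W s \<omega>)^2) t n \<omega>
      = (\<Sum>k<n. ((1 - 2*x) / (D k)^2 + (1 - 2*x) / (D (Suc k))^2) / 2 * (W (gp t n (Suc k)) \<omega> - W (gp t n k) \<omega>))"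
    unfolding strat_sum_def D_def gp_def by simp
  also have "\<dots> = (\<Sum>k<n. - (u (Suc k) - u k) - ((1 - 2*x) / (D k)^2 + (1 - 2*x) / (D (Suc k))^2) / 2 * (t / real n)
        + (1 - 2*x) * (2 * ((D (Suc k) - D k) / 2)^3 / ((D k)^2 * (D (Suc k))^2)))"
    by (rule sum.cong) (use step in auto)
  also have "\<dots> = - (u n - u 0) - Tn W x t n \<omega> + Cub W x t n \<omega>"
    unfolding sum.distrib sum_subtractf sum_negf sum_lessThan_telescope Tn_def Cub_def D_def
    using sum_lessThan_telescope[of u n] by (simp add: sum_distrib_left sum_subtractf)
  finally have "strat_sum W (\<lambda>s \<omega>. (1 - 2*x) / (Dp W s \<omega>)^2) t n \<omega> = - (u n - u 0) - Tn W x t n \<omega> + Cub W x t n \<omega>" .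
  moreover have "u 0 = 1 - x" unfolding u_def gp_def lwr_u_def using W0 by simp
  moreover have "u n = lwr_u W x t \<omega>" unfolding u_def gp_def using n by simp
  ultimately show ?thesis unfolding Iw_def by simp
qed



lemma gp_range: "0 \<le> t \<Longrightarrow> k \<le> n \<Longrightarrow> gp t n k \<in> {0..t}"
proof -
  assume t: "0 \<le> t" and k: "k \<le> n"
  show ?thesis
  proof (cases "n = 0")
    case True then show ?thesis using t by (simp add: gp_def)
  next
    case False
    have "real k * t \<le> real n * t" using k t by (intro mult_right_mono) auto
    then show ?thesis using False t by (auto simp: gp_def field_simps)
  qed
qed

lemma inv_sq_le: fixes a :: real and K :: nat assumes "1 / (real K + 1) \<le> a" shows "1 / a^2 \<le> (real K + 1)^2"
proof -
  have ap: "0 < a" using assms by (smt (verit) divide_pos_pos of_nat_0_le_iff)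
  have "1 / a \<le> real K + 1" using assms ap by (simp add: field_simps)
  then have "(1 / a)^2 \<le> (real K + 1)^2" using ap by (intro power_mono) auto
  then show ?thesis by (simp add: power_divide)
qed

lemma cub_bound:
  assumes n: "0 < n" and t0: "0 \<le> t" and DK: "\<forall>s\<in>{0..t}. 1 / (real K + 1) \<le> Dp W s \<omega>"
  shows "\<bar>Cub W x t n \<omega>\<bar> \<le> 2 * \<bar>1 - 2*x\<bar> * (real K + 1)^4 * (4 * (real n * (t / real n)^3) + 4 * Vn W t n \<omega>)"
proof -
  define D where "D k = Dp W (gp t n k) \<omega>" for k
  define w where "w k = W (gp t n (Suc k)) \<omega> - W (gp t n k) \<omega>" for k
  define h where "h = t / real n"
  have h0: "0 \<le> h" using t0 by (simp add: h_def)
  have gS: "gp t n (Suc k) - gp t n k = h" for k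
    unfolding gp_def h_def using n by (simp add: field_simps)
  have yk: "(D (Suc k) - D k) / 2 = h + w k" for k
  proof -
    have "D (Suc k) - D k = 2 * (gp t n (Suc k) - gp t n k) + 2 * w k"
      unfolding D_def Dp_def w_def by (simp add: algebra_simps)
    then show ?thesis unfolding gS by simp
  qed
  have Dlow: "k \<le> n \<Longrightarrow> 1 / (real K + 1) \<le> D k" for k
    using DK gp_range[OF t0] unfolding D_def by blast
  have trm: "\<bar>2 * ((D (Suc k) - D k) / 2)^3 / ((D k)^2 * (D (Suc k))^2)\<bar> \<le> 2 * (real K + 1)^4 * (4 * (h^3 + \<bar>w k\<bar>^3))"
    if k: "k < n" for k
  proof -
    have a: "1 / (D k)^2 \<le> (real K + 1)^2" using inv_sq_le Dlow[of k] k by simp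
    have b: "1 / (D (Suc k))^2 \<le> (real K + 1)^2" using inv_sq_le Dlow[of "Suc k"] k by simp
    have ab: "1 / ((D k)^2 * (D (Suc k))^2) \<le> (real K + 1)^4"
    proof -
      have "1 / ((D k)^2 * (D (Suc k))^2) = (1 / (D k)^2) * (1 / (D (Suc k))^2)" by simp
      also have "\<dots> \<le> (real K + 1)^2 * (real K + 1)^2"
        by (rule mult_mono[OF a b]) auto
      finally show ?thesis by (simp add: power_add[symmetric])
    qed
    have c: "\<bar>h + w k\<bar>^3 \<le> 4 * (h^3 + \<bar>w k\<bar>^3)" using cube_le[of h "w k"] h0 by simp
    have "\<bar>2 * ((D (Suc k) - D k) / 2)^3 / ((D k)^2 * (D (Suc k))^2)\<bar>
        = 2 * \<bar>h + w k\<bar>^3 * (1 / ((D k)^2 * (D (Suc k))^2))"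
      unfolding yk by (simp add: abs_mult power_abs)
    also have "\<dots> \<le> 2 * (4 * (h^3 + \<bar>w k\<bar>^3)) * (real K + 1)^4"
      by (intro mult_mono c ab mult_left_mono) (auto simp: h0)
    finally show ?thesis by (simp add: algebra_simps)
  qed
  have "\<bar>Cub W x t n \<omega>\<bar> = \<bar>1 - 2*x\<bar> * \<bar>\<Sum>k<n. 2 * ((D (Suc k) - D k) / 2)^3 / ((D k)^2 * (D (Suc k))^2)\<bar>"
    unfolding Cub_def D_def by (simp add: abs_mult)
  also have "\<dots> \<le> \<bar>1 - 2*x\<bar> * (\<Sum>k<n. 2 * (real K + 1)^4 * (4 * (h^3 + \<bar>w k\<bar>^3)))"
    by (intro mult_left_mono order_trans[OF sum_abs] sum_mono trm) auto
  also have "(\<Sum>k<n. 2 * (real K + 1)^4 * (4 * (h^3 + \<bar>w k\<bar>^3))) = 2 * (real K + 1)^4 * (4 * (real n * h^3) + 4 * Vn W t n \<omega>)"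
    unfolding Vn_def w_def by (simp add: sum_distrib_left sum.distrib algebra_simps)
  finally show ?thesis by (simp add: h_def mult.assoc)
qed



lemma incr_moment:
  assumes bm: "brownian_motion M W" and ab: "0 \<le> a" "a < b"
  shows "integrable M (\<lambda>\<omega>. \<bar>W b \<omega> - W a \<omega>\<bar>^3)"
    and "(\<integral>\<omega>. \<bar>W b \<omega> - W a \<omega>\<bar>^3 \<partial>M) = 2 * sqrt (b - a)^3 * sqrt (2 / pi)"
proof -
  have dist: "distributed M lborel (\<lambda>\<omega>. W b \<omega> - W a \<omega>) (normal_density 0 (sqrt (b - a)))"
    using bm ab unfolding brownian_motion_def by blast
  have sp: "0 < sqrt (b - a)" using ab by simp
  have "integrable lborel (\<lambda>x. normal_density 0 (sqrt (b - a)) x * \<bar>x\<bar>^3)"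
    using integrable_normal_moment_abs[where k=3 and \<mu>=0 and \<sigma>="sqrt (b - a)", OF sp] by simp
  then show "integrable M (\<lambda>\<omega>. \<bar>W b \<omega> - W a \<omega>\<bar>^3)"
    using distributed_integrable[OF dist, of "\<lambda>x. \<bar>x\<bar>^3"] by simp
  have "(\<integral>x. normal_density 0 (sqrt (b - a)) x * \<bar>x\<bar>^3 \<partial>lborel) = 2 * sqrt (b - a)^3 * sqrt (2 / pi)"
    using integral_normal_moment_abs_odd[where k=1 and \<mu>=0 and \<sigma>="sqrt (b - a)", OF sp] by simp
  then show "(\<integral>\<omega>. \<bar>W b \<omega> - W a \<omega>\<bar>^3 \<partial>M) = 2 * sqrt (b - a)^3 * sqrt (2 / pi)"
    using distributed_integral[OF dist, of "\<lambda>x. \<bar>x\<bar>^3"] by simp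
qed



lemma V_lim:
  assumes bm: "brownian_motion M W" and t0: "0 \<le> t" and dp: "0 < \<delta>"
  shows "(\<lambda>n. measure M {\<omega>\<in>space M. \<delta> \<le> Vn W t n \<omega>}) \<longlonglongrightarrow> 0"
proof -
  interpret prob_space M using bm unfolding brownian_motion_def by blast
  have Wm[measurable]: "\<And>s. W s \<in> borel_measurable M" using bm unfolding brownian_motion_def by blast
  show ?thesis
  proof (cases "t = 0")
    case True
    then have "Vn W t n \<omega> = 0" for n \<omega> unfolding Vn_def gp_def by simp
    then show ?thesis using dp by simp
  next
    case False
    then have tp: "0 < t" using t0 by simp
    define c where "c = 2 * sqrt (2 / pi) / \<delta>"
    have bound: "measure M {\<omega>\<in>space M. \<delta> \<le> Vn W t n \<omega>} \<le> c * (t * sqrt (t / real n))" if n: "0 < n" for n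
    proof -
      define h where "h = t / real n"
      have hp: "0 < h" using tp n by (simp add: h_def)
      have gS: "gp t n (Suc k) = gp t n k + h" for k
        unfolding gp_def h_def using n by (simp add: field_simps)
      have g0: "0 \<le> gp t n k" for k unfolding gp_def using t0 by simp
      have lt: "gp t n k < gp t n (Suc k)" for k using gS hp by simp
      have int: "integrable M (\<lambda>\<omega>. \<bar>W (gp t n (Suc k)) \<omega> - W (gp t n k) \<omega>\<bar>^3)" for k
        using incr_moment(1)[OF bm g0 lt] .
      have ik: "(\<integral>\<omega>. \<bar>W (gp t n (Suc k)) \<omega> - W (gp t n k) \<omega>\<bar>^3 \<partial>M) = 2 * sqrt h^3 * sqrt (2 / pi)" for k
        using incr_moment(2)[OF bm g0 lt] gS by simp
      have intV: "integrable M (Vn W t n)" unfolding Vn_def using int by auto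
      have EV: "(\<integral>\<omega>. Vn W t n \<omega> \<partial>M) = real n * (2 * sqrt h^3 * sqrt (2 / pi))"
        unfolding Vn_def using int ik by (simp add: integral_sum)
      have "measure M {\<omega>\<in>space M. \<delta> \<le> Vn W t n \<omega>} \<le> (\<integral>\<omega>. Vn W t n \<omega> \<partial>M) / \<delta>"
        by (rule integral_Markov_inequality_measure[OF intV _ _ dp, of "space M"]) (auto simp: Vn_def intro!: AE_I2 sum_nonneg)
      also have "\<dots> = c * (real n * h * sqrt h)"
        unfolding EV c_def using hp by (simp add: power3_eq_cube)
      also have "real n * h = t" using n by (simp add: h_def)
      finally show ?thesis by (simp add: h_def mult.assoc)
    qed
    have lim: "(\<lambda>n. c * (t * sqrt (t / real n))) \<longlonglongrightarrow> 0"
    proof -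
      have "(\<lambda>n. sqrt (t / real n)) \<longlonglongrightarrow> sqrt 0"
        by (intro tendsto_real_sqrt lim_const_over_n)
      then have "(\<lambda>n. c * (t * sqrt (t / real n))) \<longlonglongrightarrow> c * (t * sqrt 0)"
        by (intro tendsto_mult tendsto_const)
      then show ?thesis by simp
    qed
    show ?thesis
    proof (rule tendsto_sandwich[OF _ _ tendsto_const lim])
      show "\<forall>\<^sub>F n in sequentially. 0 \<le> measure M {\<omega>\<in>space M. \<delta> \<le> Vn W t n \<omega>}" by simp
      show "\<forall>\<^sub>F n in sequentially. measure M {\<omega>\<in>space M. \<delta> \<le> Vn W t n \<omega>} \<le> c * (t * sqrt (t / real n))"
        using eventually_gt_at_top[of 0] by eventually_elim (use bound in auto)
    qed
  qed
qed



lemma good_D: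
  assumes W0: "W 0 \<omega> = 0" and Wc: "continuous_on {0..} (\<lambda>s. W s \<omega>)" and x: "x \<in> {0..1}" and t0: "0 \<le> t"
    and g: "ereal t < lwr_sigma W x \<omega>"
  shows "\<exists>K::nat. \<forall>s\<in>{0..t}. 1 / (real K + 1) \<le> Dp W s \<omega>"
proof -
  obtain j k :: nat where H: "\<And>s. s \<in> {0..t + 1/(real j+1)} \<Longrightarrow>
      max (max (-x) (x-1)) (-1/2 + 1/(real k+1)) \<le> s + W s \<omega>"
    using sig_char[of W \<omega> x t, OF W0 Wc x t0] g by blast
  show ?thesis
  proof (intro exI ballI)
    fix s assume s: "s \<in> {0..t}"
    then have "s \<in> {0..t + 1/(real j+1)}" by (auto intro: order_trans[of _ t] simp: add_increasing2)
    then have "-1/2 + 1/(real k+1) \<le> s + W s \<omega>" using H by fastforce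
    moreover have "0 \<le> 1/(real k+1)" by simp
    ultimately show "1 / (real k + 1) \<le> Dp W s \<omega>" unfolding Dp_def by linarith
  qed
qed

lemma good_G:
  assumes W0: "W 0 \<omega> = 0" and Wc: "continuous_on {0..} (\<lambda>s. W s \<omega>)" and x: "x \<in> {0..1}" and t0: "0 \<le> t"
    and g: "ereal t < lwr_sigma W x \<omega>"
  shows "(\<lambda>n. Tn W x t n \<omega>) \<longlonglongrightarrow> integral {0..t} (\<lambda>s. (1 - 2*x) / (Dp W s \<omega>)^2)"
    and "Gl W x t \<omega> = integral {0..t} (\<lambda>s. (1 - 2*x) / (Dp W s \<omega>)^2)"
proof -
  obtain K :: nat where K: "\<forall>s\<in>{0..t}. 1 / (real K + 1) \<le> Dp W s \<omega>"
    using good_D[OF assms] by blast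
  have Dc: "continuous_on {0..t} (\<lambda>s. Dp W s \<omega>)"
    unfolding Dp_def using continuous_on_subset[OF Wc, of "{0..t}"] by (auto intro!: continuous_intros)
  have Dnz: "\<forall>s\<in>{0..t}. Dp W s \<omega> \<noteq> 0"
    using K by (metis divide_pos_pos not_less_iff_gr_or_eq of_nat_0_le_iff zero_less_one le_less_trans
        add_nonneg_pos)
  have gc: "continuous_on {0..t} (\<lambda>s. (1 - 2*x) / (Dp W s \<omega>)^2)"
    using Dc Dnz by (auto intro!: continuous_intros)
  show L: "(\<lambda>n. Tn W x t n \<omega>) \<longlonglongrightarrow> integral {0..t} (\<lambda>s. (1 - 2*x) / (Dp W s \<omega>)^2)"
    using trap[OF t0 gc] unfolding Tn_def gp_def .
  then show "Gl W x t \<omega> = integral {0..t} (\<lambda>s. (1 - 2*x) / (Dp W s \<omega>)^2)"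
    unfolding Gl_def by (rule limI)
qed

lemma A_meas:
  assumes bm: "brownian_motion M W" and x: "x \<in> {0..1}" and t0: "0 \<le> t"
  shows "{\<omega>\<in>space M. ereal t < lwr_sigma W x \<omega>} \<in> sets M"
proof -
  have Wm[measurable]: "\<And>s. W s \<in> borel_measurable M" using bm unfolding brownian_motion_def by blast
  have W0: "\<And>\<omega>. \<omega> \<in> space M \<Longrightarrow> W 0 \<omega> = 0" using bm unfolding brownian_motion_def by blast
  have Wc: "\<And>\<omega>. \<omega> \<in> space M \<Longrightarrow> continuous_on {0..} (\<lambda>s. W s \<omega>)" using bm unfolding brownian_motion_def by blast
  define T where "T j = t + 1/(real j+1)" for j :: nat
  define b where "b k = max (max (-x) (x-1)) (-1/2 + 1/(real k+1))" for k :: nat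
  have eq: "{\<omega>\<in>space M. ereal t < lwr_sigma W x \<omega>} =
     {\<omega>\<in>space M. \<exists>j k::nat. \<forall>m i::nat. i \<le> Suc m \<longrightarrow>
        b k \<le> T j * real i / real (Suc m) + W (T j * real i / real (Suc m)) \<omega>}"
  proof (rule Collect_cong)
    fix \<omega>
    show "(\<omega> \<in> space M \<and> ereal t < lwr_sigma W x \<omega>) =
      (\<omega> \<in> space M \<and> (\<exists>j k::nat. \<forall>m i::nat. i \<le> Suc m \<longrightarrow>
        b k \<le> T j * real i / real (Suc m) + W (T j * real i / real (Suc m)) \<omega>))"
    proof (cases "\<omega> \<in> space M")
      case True
      have gr: "(\<forall>s\<in>{0..T j}. b k \<le> s + W s \<omega>) \<longleftrightarrow>
          (\<forall>m i. i \<le> Suc m \<longrightarrow> b k \<le> T j * real i / real (Suc m) + W (T j * real i / real (Suc m)) \<omega>)" for j k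
      proof (rule all_grid)
        show "0 \<le> T j" using t0 by (simp add: T_def)
        show "continuous_on {0..T j} (\<lambda>s. s + W s \<omega>)"
          using continuous_on_subset[OF Wc[OF True], of "{0..T j}"] by (auto intro!: continuous_intros)
      qed
      show ?thesis using sig_char[of W \<omega> x t, OF W0[OF True] Wc[OF True] x t0] gr True
        unfolding T_def b_def by simp
    qed simp
  qed
  show ?thesis unfolding eq by measurable
qed

lemma AK_meas:
  assumes bm: "brownian_motion M W" and t0: "0 \<le> t"
  shows "{\<omega>\<in>space M. \<forall>s\<in>{0..t}. 1 / (real K + 1) \<le> Dp W s \<omega>} \<in> sets M"
proof -
  have Wm[measurable]: "\<And>s. W s \<in> borel_measurable M" using bm unfolding brownian_motion_def by blast
  have Wc: "\<And>\<omega>. \<omega> \<in> space M \<Longrightarrow> continuous_on {0..} (\<lambda>s. W s \<omega>)" using bm unfolding brownian_motion_def by blast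
  have eq: "{\<omega>\<in>space M. \<forall>s\<in>{0..t}. 1 / (real K + 1) \<le> Dp W s \<omega>} =
     {\<omega>\<in>space M. \<forall>m i::nat. i \<le> Suc m \<longrightarrow> 1 / (real K + 1) \<le> Dp W (t * real i / real (Suc m)) \<omega>}"
  proof (rule Collect_cong)
    fix \<omega>
    show "(\<omega> \<in> space M \<and> (\<forall>s\<in>{0..t}. 1 / (real K + 1) \<le> Dp W s \<omega>)) =
      (\<omega> \<in> space M \<and> (\<forall>m i::nat. i \<le> Suc m \<longrightarrow> 1 / (real K + 1) \<le> Dp W (t * real i / real (Suc m)) \<omega>))"
    proof (cases "\<omega> \<in> space M")
      case True
      have "continuous_on {0..t} (\<lambda>s. Dp W s \<omega>)"
        unfolding Dp_def using continuous_on_subset[OF Wc[OF True], of "{0..t}"] by (auto intro!: continuous_intros)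
      then show ?thesis using all_grid[OF t0, of "\<lambda>s. Dp W s \<omega>"] True by simp
    qed simp
  qed
  show ?thesis unfolding eq unfolding Dp_def by measurable
qed



lemma strat_main:
  assumes bm: "brownian_motion M W" and x: "x \<in> {0..1}" and t0: "0 \<le> t"
  shows "stratonovich_on M W (\<lambda>s \<omega>. (1 - 2*x) / (Dp W s \<omega>)^2) t
           {\<omega> \<in> space M. ereal t < lwr_sigma W x \<omega>} (Iw W x t)"
proof -
  interpret prob_space M using bm unfolding brownian_motion_def by blast
  have Wm[measurable]: "\<And>s. W s \<in> borel_measurable M" using bm unfolding brownian_motion_def by blast
  have W0: "\<And>\<omega>. \<omega> \<in> space M \<Longrightarrow> W 0 \<omega> = 0" using bm unfolding brownian_motion_def by blast
  have Wc: "\<And>\<omega>. \<omega> \<in> space M \<Longrightarrow> continuous_on {0..} (\<lambda>s. W s \<omega>)" using bm unfolding brownian_motion_def by blast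
  define A where "A = {\<omega> \<in> space M. ereal t < lwr_sigma W x \<omega>}"
  have Am: "A \<in> sets M" unfolding A_def by (rule A_meas[OF bm x t0])
  define AK where "AK K = {\<omega>\<in>space M. \<forall>s\<in>{0..t}. 1 / (real K + 1) \<le> Dp W s \<omega>}" for K :: nat
  have AKm: "AK K \<in> sets M" for K unfolding AK_def by (rule AK_meas[OF bm t0])
  define S where "S n \<omega> = strat_sum W (\<lambda>s \<omega>. (1 - 2*x) / (Dp W s \<omega>)^2) t n \<omega>" for n \<omega>
  have Sm[measurable]: "S n \<in> borel_measurable M" for n
    unfolding S_def strat_sum_def Dp_def by measurable
  have Im[measurable]: "Iw W x t \<in> borel_measurable M"
    unfolding Iw_def Gl_def Tn_def Dp_def lwr_u_def by measurable
  have Tm[measurable]: "(\<lambda>\<omega>. Tn W x t n \<omega>) \<in> borel_measurable M" for n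
    unfolding Tn_def Dp_def by measurable
  have Glm[measurable]: "Gl W x t \<in> borel_measurable M"
    unfolding Gl_def Tn_def Dp_def by measurable
  have Vm[measurable]: "Vn W t n \<in> borel_measurable M" for n
    unfolding Vn_def by measurable
  show ?thesis unfolding stratonovich_on_def S_def[symmetric] A_def[symmetric]
  proof (intro allI impI conjI)
    fix \<epsilon> :: real assume ep: "0 < \<epsilon>"
    define E where "E n = {\<omega> \<in> space M. \<omega> \<in> A \<and> \<epsilon> < \<bar>S n \<omega> - Iw W x t \<omega>\<bar>}" for n
    have Em: "E n \<in> sets M" for n
    proof -
      have "E n = A \<inter> {\<omega> \<in> space M. \<epsilon> < \<bar>S n \<omega> - Iw W x t \<omega>\<bar>}" unfolding E_def by auto
      also have "\<dots> \<in> sets M" using Am by measurable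
      finally show ?thesis .
    qed
    then show "\<And>n. {\<omega> \<in> space M. \<omega> \<in> A \<and> \<epsilon> < \<bar>S n \<omega> - Iw W x t \<omega>\<bar>} \<in> sets M"
      unfolding E_def by blast
    show "(\<lambda>n. measure M {\<omega> \<in> space M. \<omega> \<in> A \<and> \<epsilon> < \<bar>S n \<omega> - Iw W x t \<omega>\<bar>}) \<longlonglongrightarrow> 0"
      unfolding E_def[symmetric]
    proof (rule tendstoI)
      fix \<eta> :: real assume eta: "0 < \<eta>"
      have BK: "(\<lambda>K. measure M (A - AK K)) \<longlonglongrightarrow> 0"
      proof (rule meas_tendsto0)
        show "prob_space M" by (rule prob_space_axioms)
        show "A - AK K \<in> sets M" for K using Am AKm by blast
        fix \<omega> assume w: "\<omega> \<in> space M"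
        show "\<exists>N. \<forall>K\<ge>N. \<omega> \<notin> A - AK K"
        proof (cases "\<omega> \<in> A")
          case True
          then obtain K0 :: nat where K0: "\<forall>s\<in>{0..t}. 1 / (real K0 + 1) \<le> Dp W s \<omega>"
            using good_D[of W \<omega> x t, OF W0[OF w] Wc[OF w] x t0] unfolding A_def by blast
          show ?thesis
          proof (intro exI allI impI)
            fix K assume "K0 \<le> K"
            then have "1 / (real K + 1) \<le> 1 / (real K0 + 1)" by (simp add: frac_le)
            then show "\<omega> \<notin> A - AK K" using K0 w unfolding AK_def by (auto intro: order_trans)
          qed
        qed auto
      qed
      have "\<forall>\<^sub>F K in sequentially. measure M (A - AK K) < \<eta> / 3"
        using order_tendstoD(2)[OF BK, of "\<eta> / 3"] eta by simp
      then obtain K where K: "measure M (A - AK K) < \<eta> / 3"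
        unfolding eventually_sequentially by blast
      define c where "c = 2 * \<bar>1 - 2*x\<bar> * (real K + 1)^4"
      have c0: "0 \<le> c" unfolding c_def by simp
      define \<delta> where "\<delta> = \<epsilon> / (16 * (c + 1))"
      have dp: "0 < \<delta>" unfolding \<delta>_def using ep c0 by simp
      have c\<delta>: "c * (4 * \<delta>) \<le> \<epsilon> / 4"
      proof -
        have "c * (4 * \<delta>) = (\<epsilon> / 4) * (c / (c + 1))" unfolding \<delta>_def using c0 by (simp add: field_simps)
        also have "\<dots> \<le> (\<epsilon> / 4) * 1" using c0 ep by (intro mult_left_mono) auto
        finally show ?thesis by simp
      qed
      define F where "F n = {\<omega>\<in>space M. \<omega> \<in> A \<and> \<epsilon> / 2 \<le> \<bar>Gl W x t \<omega> - Tn W x t n \<omega>\<bar>}" for n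
      have Fm: "F n \<in> sets M" for n
      proof -
        have "F n = A \<inter> {\<omega>\<in>space M. \<epsilon> / 2 \<le> \<bar>Gl W x t \<omega> - Tn W x t n \<omega>\<bar>}" unfolding F_def by auto
        also have "\<dots> \<in> sets M" using Am by measurable
        finally show ?thesis .
      qed
      have FL: "(\<lambda>n. measure M (F n)) \<longlonglongrightarrow> 0"
      proof (rule meas_tendsto0[OF prob_space_axioms Fm])
        fix \<omega> assume w: "\<omega> \<in> space M"
        show "\<exists>N. \<forall>n\<ge>N. \<omega> \<notin> F n"
        proof (cases "\<omega> \<in> A")
          case True
          then have g: "ereal t < lwr_sigma W x \<omega>" unfolding A_def by blast
          have "(\<lambda>n. Tn W x t n \<omega>) \<longlonglongrightarrow> Gl W x t \<omega>"
            using good_G[of W \<omega> x t, OF W0[OF w] Wc[OF w] x t0 g] by simp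
          then have "\<forall>\<^sub>F n in sequentially. dist (Tn W x t n \<omega>) (Gl W x t \<omega>) < \<epsilon> / 2"
            using ep by (intro tendstoD) auto
          then obtain N where "\<forall>n\<ge>N. dist (Tn W x t n \<omega>) (Gl W x t \<omega>) < \<epsilon> / 2"
            unfolding eventually_sequentially by blast
          then show ?thesis unfolding F_def by (auto simp: dist_real_def abs_minus_commute not_le)
        qed (auto simp: F_def)
      qed
      define V where "V n = {\<omega>\<in>space M. \<delta> \<le> Vn W t n \<omega>}" for n
      have Vsm: "V n \<in> sets M" for n unfolding V_def by measurable
      have VL: "(\<lambda>n. measure M (V n)) \<longlonglongrightarrow> 0" unfolding V_def by (rule V_lim[OF bm t0 dp])
      have detL: "(\<lambda>n. c * (4 * (real n * (t / real n)^3))) \<longlonglongrightarrow> 0"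
      proof -
        have eq: "real n * (t / real n)^3 = t^3 * (inverse (real n))^2" for n
          by (cases "n = 0") (simp_all add: field_simps power3_eq_cube power2_eq_square)
        have "(\<lambda>n. c * (4 * (t^3 * (inverse (real n))^2))) \<longlonglongrightarrow> c * (4 * (t^3 * 0^2))"
          by (intro tendsto_intros lim_inverse_n)
        then show ?thesis unfolding eq by simp
      qed
      have ev1: "\<forall>\<^sub>F n in sequentially. measure M (F n) < \<eta> / 3"
        using order_tendstoD(2)[OF FL, of "\<eta> / 3"] eta by simp
      have ev2: "\<forall>\<^sub>F n in sequentially. measure M (V n) < \<eta> / 3"
        using order_tendstoD(2)[OF VL, of "\<eta> / 3"] eta by simp
      have ev3: "\<forall>\<^sub>F n in sequentially. c * (4 * (real n * (t / real n)^3)) < \<epsilon> / 4"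
        using order_tendstoD(2)[OF detL, of "\<epsilon> / 4"] ep by simp
      have ev4: "\<forall>\<^sub>F n in sequentially. 0 < n" by (rule eventually_gt_at_top)
      show "\<forall>\<^sub>F n in sequentially. dist (measure M (E n)) 0 < \<eta>"
        using ev1 ev2 ev3 ev4
      proof eventually_elim
        case (elim n)
        have sub: "E n \<subseteq> (F n \<union> (A - AK K)) \<union> V n"
        proof
          fix \<omega> assume wE: "\<omega> \<in> E n"
          show "\<omega> \<in> (F n \<union> (A - AK K)) \<union> V n"
          proof (rule ccontr)
            assume nin: "\<omega> \<notin> (F n \<union> (A - AK K)) \<union> V n"
            have w: "\<omega> \<in> space M" and wA: "\<omega> \<in> A" and big: "\<epsilon> < \<bar>S n \<omega> - Iw W x t \<omega>\<bar>"
              using wE unfolding E_def by auto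
            have wK: "\<forall>s\<in>{0..t}. 1 / (real K + 1) \<le> Dp W s \<omega>" using nin wA unfolding AK_def by blast
            have g1: "\<bar>Gl W x t \<omega> - Tn W x t n \<omega>\<bar> < \<epsilon> / 2" using nin wA w unfolding F_def by auto
            have v1: "Vn W t n \<omega> < \<delta>" using nin w unfolding V_def by auto
            have Dnz: "Dp W (gp t n k) \<omega> \<noteq> 0" if "k \<le> n" for k
            proof -
              have "1 / (real K + 1) \<le> Dp W (gp t n k) \<omega>" using wK gp_range[OF t0 that] by blast
              moreover have "0 < 1 / (real K + 1)" by simp
              ultimately show ?thesis by linarith
            qed
            have id: "S n \<omega> - Iw W x t \<omega> = (Gl W x t \<omega> - Tn W x t n \<omega>) + Cub W x t n \<omega>"
              unfolding S_def by (rule path_ident[OF W0[OF w] elim(4) Dnz])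
            have cb: "\<bar>Cub W x t n \<omega>\<bar> \<le> c * (4 * (real n * (t / real n)^3) + 4 * Vn W t n \<omega>)"
              using cub_bound[OF elim(4) t0 wK, of x] unfolding c_def by simp
            have cv: "c * (4 * Vn W t n \<omega>) \<le> c * (4 * \<delta>)" using v1 c0 by (intro mult_left_mono) auto
            have cb': "\<bar>Cub W x t n \<omega>\<bar> \<le> c * (4 * (real n * (t / real n)^3)) + c * (4 * Vn W t n \<omega>)"
              using cb by (simp only: distrib_left)
            have "\<bar>Cub W x t n \<omega>\<bar> < \<epsilon> / 2" using cb' elim(3) c\<delta> cv by linarith
            then have "\<bar>S n \<omega> - Iw W x t \<omega>\<bar> < \<epsilon>" unfolding id using g1 by linarith
            then show False using big by simp
          qed
        qed
        have "measure M (E n) \<le> measure M ((F n \<union> (A - AK K)) \<union> V n)"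
          using sub Em Fm Vsm Am AKm by (intro finite_measure_mono) auto
        also have "\<dots> \<le> measure M (F n \<union> (A - AK K)) + measure M (V n)"
          using Fm Vsm Am AKm by (intro measure_Un_le) auto
        also have "\<dots> \<le> measure M (F n) + measure M (A - AK K) + measure M (V n)"
          using Fm Am AKm measure_Un_le[of "F n" M "A - AK K"] by auto
        also have "\<dots> < \<eta>" using elim(1) elim(2) K by simp
        finally show ?case by simp
      qed
    qed
  qed
qed



theorem mainTheorem1:
  fixes M :: "'a measure" and W :: "real \<Rightarrow> 'a \<Rightarrow> real"
  assumes "brownian_motion M W"
  shows "\<exists>I :: real \<Rightarrow> real \<Rightarrow> 'a \<Rightarrow> real.
     (\<forall>x\<in>{0..1}. \<forall>t\<ge>0.
        stratonovich_on M W
          (\<lambda>s \<omega>. (1 - 2 * lwr_u W x s \<omega>) * deriv (\<lambda>y. lwr_u W y s \<omega>) x)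
          t {\<omega> \<in> space M. ereal t < lwr_sigma W x \<omega>} (I x t)) \<and>
     (AE \<omega> in M.
        (\<forall>x\<in>{0..1}. lwr_u W x 0 \<omega> = 1 - x) \<and>
        (\<forall>x\<in>{0..1}. \<forall>t\<ge>0. ereal t < lwr_sigma W x \<omega> \<longrightarrow>
           lwr_u W x t \<omega> = 1 - x
             - integral {0..t} (\<lambda>s. (1 - 2 * lwr_u W x s \<omega>) * deriv (\<lambda>y. lwr_u W y s \<omega>) x)
             - I x t \<omega>))"
proof -
  note bm = assms
  have W0: "\<And>\<omega>. \<omega> \<in> space M \<Longrightarrow> W 0 \<omega> = 0" using bm unfolding brownian_motion_def by blast
  have Wc: "\<And>\<omega>. \<omega> \<in> space M \<Longrightarrow> continuous_on {0..} (\<lambda>s. W s \<omega>)" using bm unfolding brownian_motion_def by blast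
  have Heq: "(\<lambda>s \<omega>. (1 - 2 * lwr_u W x s \<omega>) * deriv (\<lambda>y. lwr_u W y s \<omega>) x) = (\<lambda>s \<omega>. (1 - 2*x) / (Dp W s \<omega>)^2)" for x
    by (intro ext) (rule H_eq)
  show ?thesis
  proof (intro exI[of _ "Iw W"] conjI ballI allI impI)
    fix x t :: real assume x: "x \<in> {0..1}" and t0: "0 \<le> t"
    show "stratonovich_on M W (\<lambda>s \<omega>. (1 - 2 * lwr_u W x s \<omega>) * deriv (\<lambda>y. lwr_u W y s \<omega>) x)
          t {\<omega> \<in> space M. ereal t < lwr_sigma W x \<omega>} (Iw W x t)"
      unfolding Heq by (rule strat_main[OF bm x t0])
  next
    show "AE \<omega> in M.
        (\<forall>x\<in>{0..1}. lwr_u W x 0 \<omega> = 1 - x) \<and>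
        (\<forall>x\<in>{0..1}. \<forall>t\<ge>0. ereal t < lwr_sigma W x \<omega> \<longrightarrow>
           lwr_u W x t \<omega> = 1 - x
             - integral {0..t} (\<lambda>s. (1 - 2 * lwr_u W x s \<omega>) * deriv (\<lambda>y. lwr_u W y s \<omega>) x)
             - Iw W x t \<omega>)"
    proof (rule AE_I2, intro conjI ballI allI impI)
      fix \<omega> x assume w: "\<omega> \<in> space M"
      show "lwr_u W x 0 \<omega> = 1 - x" unfolding lwr_u_def using W0[OF w] by simp
    next
      fix \<omega> x t assume w: "\<omega> \<in> space M" and x: "x \<in> {0..1}" and t0: "0 \<le> t"
        and g: "ereal t < lwr_sigma W x \<omega>"
      have G: "Gl W x t \<omega> = integral {0..t} (\<lambda>s. (1 - 2*x) / (Dp W s \<omega>)^2)"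
        using good_G(2)[of W \<omega> x t, OF W0[OF w] Wc[OF w] x t0 g] .
      have "integral {0..t} (\<lambda>s. (1 - 2 * lwr_u W x s \<omega>) * deriv (\<lambda>y. lwr_u W y s \<omega>) x)
          = integral {0..t} (\<lambda>s. (1 - 2*x) / (Dp W s \<omega>)^2)"
        by (rule arg_cong[where f="integral {0..t}"]) (rule ext, rule H_eq)
      then show "lwr_u W x t \<omega> = 1 - x
             - integral {0..t} (\<lambda>s. (1 - 2 * lwr_u W x s \<omega>) * deriv (\<lambda>y. lwr_u W y s \<omega>) x)
             - Iw W x t \<omega>"
        unfolding Iw_def G by simp
    qed
  qed
qed


end
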